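(* Let $v\geq 8$ and let $C_v$ be the cyclic configuration on point set $\mathbb{Z}_v$ whose blocks are $\{m,m+1,m+3\}$ for $m\in\mathbb{Z}_v$. Then the minimum cardinality of a blocking set of $C_v$ is \[ m(v)=2\left\lfloor \frac{v}{5}\right\rfloor+\varepsilon,\quad \varepsilon=\begin{cases}0&\text{if } v\equiv 0\pmod 5,\\ 1&\text{if } v\equiv 1\pmod 5,\\ 2&\text{if } v\equiv 2,3,4\pmod 5.\end{cases}\]
   Context: A blocking set of a configuration (a set of points with a collection of 3-element blocks) is a subset $Q$ of the points such that every block contains at least one point of $Q$ and at least one point not in $Q$. *)

theory Defs
  imports Main
begin

definition blocking_set :: "'a set \<Rightarrow> 'a set set \<Rightarrow> 'a set \<Rightarrow> bool" where
  "blocking_set P B Q \<longleftrightarrow> Q \<subseteq> P \<and> (\<forall>b\<in>B. b \<inter> Q \<noteq> {} \<and> b - Q \<noteq> {})"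

definition cyc_points :: "nat \<Rightarrow> nat set" where
  "cyc_points v = {0..<v}"

definition cyc_blocks :: "nat \<Rightarrow> nat set set" where
  "cyc_blocks v = {{m, (m + 1) mod v, (m + 3) mod v} | m. m < v}"

definition m_val :: "nat \<Rightarrow> nat" where
  "m_val v = 2 * (v div 5) + (if v mod 5 = 0 then 0 else if v mod 5 = 1 then 1 else 2)"

end

theory Submission
  imports Defs
begin


lemma card_ind: "finite A \<Longrightarrow> int (card {i\<in>A. P i}) = (\<Sum>i\<in>A. if P i then 1 else 0)"
  by (simp add: sum.If_cases Int_def)

lemma shift1:
  fixes g :: "nat \<Rightarrow> int"
  assumes "\<And>i. g (i + v) = g i"
  shows "(\<Sum>i<v. g (i+1)) = (\<Sum>i<v. g i)"
proof -
  have "(\<Sum>i<Suc v. g i) = g 0 + (\<Sum>i<v. g (Suc i))" by (rule sum.lessThan_Suc_shift)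
  moreover have "(\<Sum>i<Suc v. g i) = (\<Sum>i<v. g i) + g v" by simp
  moreover have "g v = g 0" using assms[of 0] by simp
  ultimately show ?thesis by simp
qed

lemma shiftc:
  fixes g :: "nat \<Rightarrow> int"
  assumes "\<And>i. g (i + v) = g i"
  shows "(\<Sum>i<v. g (i+c)) = (\<Sum>i<v. g i)"
proof (induction c)
  case 0 then show ?case by simp
next
  case (Suc c)
  have "(\<Sum>i<v. g (i + Suc c)) = (\<Sum>i<v. (\<lambda>j. g (j + c)) (i+1))" by (simp add: add.commute add.left_commute)
  also have "\<dots> = (\<Sum>i<v. g (i + c))"
    by (rule shift1) (metis add.commute add.left_commute assms)
  finally show ?case using Suc by simp
qed

lemma mcases:
  obtains "v = 5*(v div 5)" "m_val v = 2*(v div 5)"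
  | "v = 5*(v div 5) + 1" "m_val v = 2*(v div 5) + 1"
  | "v = 5*(v div 5) + 2" "m_val v = 2*(v div 5) + 2"
  | "v = 5*(v div 5) + 3" "m_val v = 2*(v div 5) + 2"
  | "v = 5*(v div 5) + 4" "m_val v = 2*(v div 5) + 2"
proof -
  have v: "v = 5*(v div 5) + v mod 5" by simp
  have "v mod 5 < 5" by simp
  then consider "v mod 5 = 0" | "v mod 5 = 1" | "v mod 5 = 2" | "v mod 5 = 3" | "v mod 5 = 4" by linarith
  then show ?thesis
  proof cases
    case 1 then show ?thesis using that(1) v unfolding m_val_def by simp
  next
    case 2 then show ?thesis using that(2) v unfolding m_val_def by simp
  next
    case 3 then show ?thesis using that(3) v unfolding m_val_def by simp
  next
    case 4 then show ?thesis using that(4) v unfolding m_val_def by simp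
  next
    case 5 then show ?thesis using that(5) v unfolding m_val_def by simp
  qed
qed
lemma ar1: "2 * c = (v::nat) \<Longrightarrow> v \<ge> 8 \<Longrightarrow> m_val v \<le> c"
  by (rule mcases[of v]) linarith+
lemma aux2: "2 * t \<le> (c::nat) \<Longrightarrow> 5*k + r \<le> c + 3 * t \<Longrightarrow> 2 \<le> r \<Longrightarrow> 2*k+2 \<le> c"
  by presburger
lemma aux1: "2 * t \<le> (c::nat) \<Longrightarrow> 5*k + 1 \<le> c + 3 * t \<Longrightarrow> 2*k+1 \<le> c"
  by presburger
lemma aux0: "2 * t \<le> (c::nat) \<Longrightarrow> 5*k \<le> c + 3 * t \<Longrightarrow> 2*k \<le> c"
  by presburger
lemma ar2: "2 * t \<le> (c::nat) \<Longrightarrow> v \<le> c + 3 * t \<Longrightarrow> m_val v \<le> c"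
  apply (rule mcases[of v])
  using aux0[of t c "v div 5"] aux1[of t c "v div 5"] aux2[of t c "v div 5" 2] aux2[of t c "v div 5" 3] aux2[of t c "v div 5" 4] by simp_all

lemma lower:
  fixes v :: nat and Q :: "nat set"
  assumes v8: "v \<ge> 8" and sub: "Q \<subseteq> {0..<v}"
    and rule: "\<And>m. m < v \<Longrightarrow> \<not> ((m \<in> Q \<and> (m+1) mod v \<in> Q \<and> (m+3) mod v \<in> Q) \<or> (m \<notin> Q \<and> (m+1) mod v \<notin> Q \<and> (m+3) mod v \<notin> Q))"
  shows "m_val v \<le> card Q"
proof -
  define f where "f i = (i mod v \<in> Q)" for i
  have fper: "f (i + v * c) = f i" for i c by (simp add: f_def)
  have fper1: "f (i + v) = f i" for i by (simp add: f_def)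
  have R: "\<not> (f m = f (m+1) \<and> f (m+1) = f (m+3))" for m
  proof -
    have v0: "v > 0" using v8 by simp
    have "(m mod v + 1) mod v = (m+1) mod v" "(m mod v + 3) mod v = (m+3) mod v"
      by (simp_all add: mod_simps)
    with rule[of "m mod v"] v0 show ?thesis unfolding f_def by auto
  qed
  define F where "F i = (if f i then 1 else 0 :: int)" for i
  define s where "s i = (if \<not> f i \<and> f (i+1) then 1 else 0 :: int)" for i
  define n where "n i = (if f i \<and> \<not> f (i+1) then 1 else 0 :: int)" for i
  have Fp: "F (i+v) = F i" for i by (simp add: F_def fper1)
  have sp: "s (i+v) = s i" for i unfolding s_def using fper1[of i] fper1[of "i+1"] by (simp add: add.commute add.left_commute)
  have np: "n (i+v) = n i" for i unfolding n_def using fper1[of i] fper1[of "i+1"] by (simp add: add.commute add.left_commute)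
  define q where "q = (\<Sum>i<v. F i)"
  define T where "T = (\<Sum>i<v. s i)"
  have qc: "q = int (card Q)"
  proof -
    have "Q = {i\<in>{..<v}. f i}" using sub by (auto simp: f_def)
    then show ?thesis unfolding q_def F_def using card_ind[of "{..<v}" f] by simp
  qed
  have Fsum: "(\<Sum>i<v. F (i+c)) = q" for c unfolding q_def by (rule shiftc) (rule Fp)
  have ssum: "(\<Sum>i<v. s (i+c)) = T" for c unfolding T_def by (rule shiftc) (rule sp)
  have nsum: "(\<Sum>i<v. n (i+c)) = (\<Sum>i<v. n i)" for c by (rule shiftc) (rule np)
  have "(\<Sum>i<v. F (i+1) - F i) = (\<Sum>i<v. s i - n i)"
    by (rule sum.cong) (auto simp: F_def s_def n_def)
  then have nT: "(\<Sum>i<v. n i) = T"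
    using Fsum[of 1] Fsum[of 0] by (simp add: sum_subtractf T_def)
  show ?thesis
  proof (cases "\<forall>i. f i \<noteq> f (i+1)")
    case True
    have "F (i+1) + F i = 1" for i using True[rule_format, of i] by (cases "f i") (auto simp: F_def)
    then have "(\<Sum>i<v. F (i+1) + F i) = (\<Sum>i<v. 1)" by simp
    then have "2 * q = int v" using Fsum[of 1] Fsum[of 0] by (simp add: sum.distrib)
    then have "2 * card Q = v" using qc by linarith
    then show ?thesis using ar1 v8 by blast
  next
    case False
    then obtain p where Ep: "f p = f (p+1)" by auto
    have step: "f m = f (Suc m) \<Longrightarrow> f (Suc m) = f (Suc (Suc m)) \<or> f (Suc (Suc m)) = f (Suc (Suc (Suc m)))" for m
      using R[of m] by (auto simp: numeral_3_eq_3)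
    have ind: "f (p+c) = f (Suc (p+c)) \<or> f (Suc (p+c)) = f (Suc (Suc (p+c)))" for c
    proof (induction c)
      case 0 then show ?case using Ep by simp
    next
      case (Suc c)
      then show ?case using step[of "p+c"] by auto
    qed
    have P: "f j \<noteq> f (j+1) \<Longrightarrow> f (j+1) = f (j+2)" for j
    proof -
      assume a: "f j \<noteq> f (j+1)"
      have e: "p + (j + v*p - p) = j + v * p" proof -
        have "p \<le> v * p" using v8 by simp
        then show ?thesis by linarith
      qed
      have "f (j + v*p) = f (j+v*p+1) \<or> f (j+v*p+1) = f (j+v*p+2)"
        using ind[of "j + v*p - p"] unfolding e by (simp add: numeral_2_eq_2)
      moreover have "f (j + v*p + c) = f (j + c)" for c using fper[of "j+c" p] by (simp add: ac_simps)
      ultimately show ?thesis using a fper[of j p] by (metis add.assoc)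
    qed
    have "(\<Sum>i<v. s (i+1) + s i) \<le> (\<Sum>i<v. F (i+2))"
      by (rule sum_mono) (use P in \<open>auto simp: F_def s_def numeral_2_eq_2\<close>)
    then have A: "2 * T \<le> q" using ssum[of 1] ssum[of 0] Fsum[of 2] by (simp add: sum.distrib)
    have "(\<Sum>i<v. 1 - F (i+3)) \<le> (\<Sum>i<v. n (i+2) + n (i+1) + n i)"
      by (rule sum_mono) (use R in \<open>auto simp: F_def n_def numeral_2_eq_2 numeral_3_eq_3\<close>)
    then have B: "int v - q \<le> 3 * T" using nsum[of 2] nsum[of 1] nsum[of 0] nT Fsum[of 3]
      by (simp add: sum.distrib sum_subtractf)
    have T0: "T \<ge> 0" unfolding T_def s_def by (rule sum_nonneg) simp
    have "2 * nat T \<le> card Q" "v \<le> card Q + 3 * nat T" using A B qc T0 by linarith+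
    then show ?thesis by (rule ar2)
  qed
qed



definition A :: "nat \<Rightarrow> nat set" where "A k = {i. i < 5*k \<and> i mod 5 < 2}"
lemma modsplit: "(m::nat) < v \<Longrightarrow> 4 \<le> v \<Longrightarrow> (m+1) mod v = (if m+1 < v then m+1 else m+1-v) \<and> (m+3) mod v = (if m+3 < v then m+3 else m+3-v)"
  by (auto simp: mod_if le_mod_geq)
definition good :: "nat \<Rightarrow> nat set \<Rightarrow> bool" where
 "good v Q \<longleftrightarrow> (\<forall>m<v. \<not> ((m \<in> Q \<and> (m+1) mod v \<in> Q \<and> (m+3) mod v \<in> Q) \<or> (m \<notin> Q \<and> (m+1) mod v \<notin> Q \<and> (m+3) mod v \<notin> Q)))"

lemma five_cases:
  fixes m :: nat
  obtains a where "m = 5*a" | a where "m = 5*a+1" | a where "m = 5*a+2" | a where "m = 5*a+3" | a where "m = 5*a+4"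
proof -
  have m: "m = 5*(m div 5) + m mod 5" by simp
  have "m mod 5 < 5" by simp
  then consider "m mod 5 = 0" | "m mod 5 = 1" | "m mod 5 = 2" | "m mod 5 = 3" | "m mod 5 = 4" by linarith
  then show ?thesis using that m by (cases; metis add.right_neutral)
qed

lemma good0: "v = 5*k \<Longrightarrow> k \<ge> 2 \<Longrightarrow> good v (A k)"
  unfolding good_def
proof (intro allI impI)
  fix m assume a: "v = 5*k" "k \<ge> 2" "m < v"
  let ?Q = "A k"
  show "\<not> ((m \<in> ?Q \<and> (m+1) mod v \<in> ?Q \<and> (m+3) mod v \<in> ?Q) \<or> (m \<notin> ?Q \<and> (m+1) mod v \<notin> ?Q \<and> (m+3) mod v \<notin> ?Q))"
  proof (cases "m + 3 < v")
    case True
    then have e: "(m+1) mod v = m+1" "(m+3) mod v = m+3" by simp_all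
    show ?thesis unfolding e A_def
      by (rule five_cases[of m]) (use a True in \<open>simp; arith\<close>)+
  next
    case False
    obtain j where j: "k = j + 2" using a(2) by (metis le_add_diff_inverse2)
    from False consider "m = 5*j+7" | "m = 5*j+8" | "m = 5*j+9" using a j by linarith
    then show ?thesis
    proof cases
      case 1
      have "(m+1) mod v = 5*j+8" "(m+3) mod v = 0" using a j 1 by (simp_all add: mod_if)
      then show ?thesis using 1 j by (simp add: A_def)
    next
      case 2
      have "(m+1) mod v = 5*j+9" "(m+3) mod v = 1" using a j 2 by (simp_all add: mod_if)
      then show ?thesis using 2 j by (simp add: A_def)
    next
      case 3
      have "(m+1) mod v = 0" "(m+3) mod v = 2" using a j 3 by (simp_all add: mod_if)
      then show ?thesis using 3 j by (simp add: A_def)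
    qed
  qed
qed

lemma good1: "v = 5*k+1 \<Longrightarrow> k \<ge> 2 \<Longrightarrow> good v (insert (5*k) (A k))"
  unfolding good_def
proof (intro allI impI)
  fix m assume a: "v = 5*k+1" "k \<ge> 2" "m < v"
  let ?Q = "insert (5*k) (A k)"
  show "\<not> ((m \<in> ?Q \<and> (m+1) mod v \<in> ?Q \<and> (m+3) mod v \<in> ?Q) \<or> (m \<notin> ?Q \<and> (m+1) mod v \<notin> ?Q \<and> (m+3) mod v \<notin> ?Q))"
  proof (cases "m + 3 < v")
    case True
    then have e: "(m+1) mod v = m+1" "(m+3) mod v = m+3" by simp_all
    show ?thesis unfolding e A_def
      by (rule five_cases[of m]) (use a True in \<open>simp; arith\<close>)+
  next
    case False
    obtain j where j: "k = j + 2" using a(2) by (metis le_add_diff_inverse2)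
    from False consider "m = 5*j+8" | "m = 5*j+9" | "m = 5*j+10" using a j by linarith
    then show ?thesis
    proof cases
      case 1
      have "(m+1) mod v = 5*j+9" "(m+3) mod v = 0" using a j 1 by (simp_all add: mod_if)
      then show ?thesis using 1 j by (simp add: A_def)
    next
      case 2
      have "(m+1) mod v = 5*j+10" "(m+3) mod v = 1" using a j 2 by (simp_all add: mod_if)
      then show ?thesis using 2 j by (simp add: A_def)
    next
      case 3
      have "(m+1) mod v = 0" "(m+3) mod v = 2" using a j 3 by (simp_all add: mod_if)
      then show ?thesis using 3 j by (simp add: A_def)
    qed
  qed
qed

lemma good2: "v = 5*k+2 \<Longrightarrow> k \<ge> 2 \<Longrightarrow> good v (A k \<union> {5*k-3, 5*k+1})"
  unfolding good_def
proof (intro allI impI)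
  fix m assume a: "v = 5*k+2" "k \<ge> 2" "m < v"
  let ?Q = "A k \<union> {5*k-3, 5*k+1}"
  show "\<not> ((m \<in> ?Q \<and> (m+1) mod v \<in> ?Q \<and> (m+3) mod v \<in> ?Q) \<or> (m \<notin> ?Q \<and> (m+1) mod v \<notin> ?Q \<and> (m+3) mod v \<notin> ?Q))"
  proof (cases "m + 3 < v")
    case True
    then have e: "(m+1) mod v = m+1" "(m+3) mod v = m+3" by simp_all
    show ?thesis unfolding e A_def
      by (rule five_cases[of m]) (use a True in \<open>simp; arith\<close>)+
  next
    case False
    obtain j where j: "k = j + 2" using a(2) by (metis le_add_diff_inverse2)
    from False consider "m = 5*j+9" | "m = 5*j+10" | "m = 5*j+11" using a j by linarith
    then show ?thesis
    proof cases
      case 1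
      have "(m+1) mod v = 5*j+10" "(m+3) mod v = 0" using a j 1 by (simp_all add: mod_if)
      then show ?thesis using 1 j by (simp add: A_def)
    next
      case 2
      have "(m+1) mod v = 5*j+11" "(m+3) mod v = 1" using a j 2 by (simp_all add: mod_if)
      then show ?thesis using 2 j by (simp add: A_def)
    next
      case 3
      have "(m+1) mod v = 0" "(m+3) mod v = 2" using a j 3 by (simp_all add: mod_if)
      then show ?thesis using 3 j by (simp add: A_def)
    qed
  qed
qed

lemma good3: "v = 5*k+3 \<Longrightarrow> k \<ge> 1 \<Longrightarrow> good v (A k \<union> {5*k-1, 5*k})"
  unfolding good_def
proof (intro allI impI)
  fix m assume a: "v = 5*k+3" "k \<ge> 1" "m < v"
  let ?Q = "A k \<union> {5*k-1, 5*k}"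
  show "\<not> ((m \<in> ?Q \<and> (m+1) mod v \<in> ?Q \<and> (m+3) mod v \<in> ?Q) \<or> (m \<notin> ?Q \<and> (m+1) mod v \<notin> ?Q \<and> (m+3) mod v \<notin> ?Q))"
  proof (cases "m + 3 < v")
    case True
    then have e: "(m+1) mod v = m+1" "(m+3) mod v = m+3" by simp_all
    show ?thesis unfolding e A_def
      by (rule five_cases[of m]) (use a True in \<open>simp; arith\<close>)+
  next
    case False
    obtain j where j: "k = j + 1" using a(2) by (metis le_add_diff_inverse2)
    from False consider "m = 5*j+5" | "m = 5*j+6" | "m = 5*j+7" using a j by linarith
    then show ?thesis
    proof cases
      case 1
      have "(m+1) mod v = 5*j+6" "(m+3) mod v = 0" using a j 1 by (simp_all add: mod_if)
      then show ?thesis using 1 j by (simp add: A_def)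
    next
      case 2
      have "(m+1) mod v = 5*j+7" "(m+3) mod v = 1" using a j 2 by (simp_all add: mod_if)
      then show ?thesis using 2 j by (simp add: A_def)
    next
      case 3
      have "(m+1) mod v = 0" "(m+3) mod v = 2" using a j 3 by (simp_all add: mod_if)
      then show ?thesis using 3 j by (simp add: A_def)
    qed
  qed
qed

lemma good4: "v = 5*k+4 \<Longrightarrow> k \<ge> 1 \<Longrightarrow> good v (A k \<union> {5*k, 5*k+1})"
  unfolding good_def
proof (intro allI impI)
  fix m assume a: "v = 5*k+4" "k \<ge> 1" "m < v"
  let ?Q = "A k \<union> {5*k, 5*k+1}"
  show "\<not> ((m \<in> ?Q \<and> (m+1) mod v \<in> ?Q \<and> (m+3) mod v \<in> ?Q) \<or> (m \<notin> ?Q \<and> (m+1) mod v \<notin> ?Q \<and> (m+3) mod v \<notin> ?Q))"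
  proof (cases "m + 3 < v")
    case True
    then have e: "(m+1) mod v = m+1" "(m+3) mod v = m+3" by simp_all
    show ?thesis unfolding e A_def
      by (rule five_cases[of m]) (use a True in \<open>simp; arith\<close>)+
  next
    case False
    obtain j where j: "k = j + 1" using a(2) by (metis le_add_diff_inverse2)
    from False consider "m = 5*j+6" | "m = 5*j+7" | "m = 5*j+8" using a j by linarith
    then show ?thesis
    proof cases
      case 1
      have "(m+1) mod v = 5*j+7" "(m+3) mod v = 0" using a j 1 by (simp_all add: mod_if)
      then show ?thesis using 1 j by (simp add: A_def)
    next
      case 2
      have "(m+1) mod v = 5*j+8" "(m+3) mod v = 1" using a j 2 by (simp_all add: mod_if)
      then show ?thesis using 2 j by (simp add: A_def)
    next
      case 3
      have "(m+1) mod v = 0" "(m+3) mod v = 2" using a j 3 by (simp_all add: mod_if)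
      then show ?thesis using 3 j by (simp add: A_def)
    qed
  qed
qed

lemma cardA: "card (A k) = 2 * k"
proof (induction k)
  case 0 then show ?case by (simp add: A_def)
next
  case (Suc k)
  have "A (Suc k) = insert (5*k) (insert (5*k+1) (A k))" unfolding A_def by (auto; presburger)
  moreover have "5*k \<notin> A k" "5*k+1 \<notin> A k" by (auto simp: A_def)
  moreover have "finite (A k)" by (auto simp: A_def)
  ultimately show ?case using Suc by simp
qed

lemma tri: "({x,y,z} \<inter> Q \<noteq> {} \<and> {x,y,z} - Q \<noteq> {}) \<longleftrightarrow> \<not> ((x \<in> Q \<and> y \<in> Q \<and> z \<in> Q) \<or> (x \<notin> Q \<and> y \<notin> Q \<and> z \<notin> Q))"
  by auto
lemma ballB: "(\<forall>b\<in>cyc_blocks v. P b) \<longleftrightarrow> (\<forall>m<v. P {m, (m+1) mod v, (m+3) mod v})"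
  unfolding cyc_blocks_def by blast
lemma bs_iff: "blocking_set (cyc_points v) (cyc_blocks v) Q \<longleftrightarrow> Q \<subseteq> {0..<v} \<and> good v Q"
  unfolding blocking_set_def ballB tri good_def cyc_points_def ..

lemma finA: "finite (A k)" by (auto simp: A_def)
lemma subA: "A k \<subseteq> {0..<5*k}" by (auto simp: A_def)
lemma memA: "i \<in> A k \<longleftrightarrow> i < 5*k \<and> i mod 5 < 2" by (simp add: A_def)

lemma upper:
  assumes v8: "v \<ge> 8"
  shows "\<exists>Q. Q \<subseteq> {0..<v} \<and> good v Q \<and> card Q = m_val v"
proof -
  define k where "k = v div 5"
  have vk: "v = 5*k + v mod 5" unfolding k_def by simp
  have mv: "m_val v = 2*k + (if v mod 5 = 0 then 0 else if v mod 5 = 1 then 1 else 2)"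
    unfolding m_val_def k_def by simp
  have r: "v mod 5 < 5" by simp
  consider "v mod 5 = 0" | "v mod 5 = 1" | "v mod 5 = 2" | "v mod 5 = 3" | "v mod 5 = 4" using r by linarith
  then show ?thesis
  proof cases
    case 1
    have v: "v = 5*k" using vk 1 by linarith
    have k: "k \<ge> 2" using v v8 by linarith
    have "A k \<subseteq> {0..<v}" using subA[of k] v by simp
    moreover have "card (A k) = m_val v" using cardA[of k] mv 1 by simp
    ultimately show ?thesis using good0[OF v k] by blast
  next
    case 2
    have v: "v = 5*k+1" using vk 2 by linarith
    have k: "k \<ge> 2" using v v8 by linarith
    have "5*k \<notin> A k" by (simp add: memA)
    then have "card (insert (5*k) (A k)) = 2*k+1" using cardA[of k] finA[of k] by simp
    then have "card (insert (5*k) (A k)) = m_val v" using mv 2 by simp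
    moreover have "insert (5*k) (A k) \<subseteq> {0..<v}" using subA[of k] v by auto
    ultimately show ?thesis using good1[OF v k] by blast
  next
    case 3
    have v: "v = 5*k+2" using vk 3 by linarith
    have k: "k \<ge> 2" using v v8 by linarith
    have e: "A k \<union> {5*k-3, 5*k+1} = insert (5*k-3) (insert (5*k+1) (A k))" by auto
    have "(5*k-3) mod 5 = 2"
    proof -
      have "5*k-3 = 2 + 5*(k-1)" using k by simp
      moreover have "(2 + 5*(k-1)) mod 5 = (2::nat)" by (simp only: mod_mult_self2) simp
      ultimately show ?thesis by simp
    qed
    then have n1: "5*k-3 \<notin> A k" unfolding memA by simp
    have n2: "5*k+1 \<notin> A k" "5*k-3 \<noteq> 5*k+1" using k by (simp_all add: memA)
    have "card (A k \<union> {5*k-3, 5*k+1}) = 2*k+2" unfolding e using cardA[of k] finA[of k] n1 n2 by simp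
    then have "card (A k \<union> {5*k-3, 5*k+1}) = m_val v" using mv 3 by simp
    moreover have "A k \<union> {5*k-3, 5*k+1} \<subseteq> {0..<v}" using subA[of k] v by auto
    ultimately show ?thesis using good2[OF v k] by blast
  next
    case 4
    have v: "v = 5*k+3" using vk 4 by linarith
    have k: "k \<ge> 1" using v v8 by linarith
    have e: "A k \<union> {5*k-1, 5*k} = insert (5*k-1) (insert (5*k) (A k))" by auto
    have "(5*k-1) mod 5 = 4"
    proof -
      have "5*k-1 = 4 + 5*(k-1)" using k by simp
      moreover have "(4 + 5*(k-1)) mod 5 = (4::nat)" by (simp only: mod_mult_self2) simp
      ultimately show ?thesis by simp
    qed
    then have n1: "5*k-1 \<notin> A k" unfolding memA by simp
    have n2: "5*k \<notin> A k" "5*k-1 \<noteq> 5*k" using k by (simp_all add: memA)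
    have "card (A k \<union> {5*k-1, 5*k}) = 2*k+2" unfolding e using cardA[of k] finA[of k] n1 n2 by simp
    then have "card (A k \<union> {5*k-1, 5*k}) = m_val v" using mv 4 by simp
    moreover have "A k \<union> {5*k-1, 5*k} \<subseteq> {0..<v}" using subA[of k] v by auto
    ultimately show ?thesis using good3[OF v k] by blast
  next
    case 5
    have v: "v = 5*k+4" using vk 5 by linarith
    have k: "k \<ge> 1" using v v8 by linarith
    have e: "A k \<union> {5*k, 5*k+1} = insert (5*k) (insert (5*k+1) (A k))" by auto
    have n2: "5*k \<notin> A k" "5*k+1 \<notin> A k" by (simp_all add: memA)
    have "card (A k \<union> {5*k, 5*k+1}) = 2*k+2" unfolding e using cardA[of k] finA[of k] n2 by simp
    then have "card (A k \<union> {5*k, 5*k+1}) = m_val v" using mv 5 by simp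
    moreover have "A k \<union> {5*k, 5*k+1} \<subseteq> {0..<v}" using subA[of k] v by auto
    ultimately show ?thesis using good4[OF v k] by blast
  qed
qed

theorem mainTheorem4:
  fixes v :: nat
  assumes "v \<ge> 8"
  shows "(\<exists>Q. blocking_set (cyc_points v) (cyc_blocks v) Q \<and> card Q = m_val v)
       \<and> (\<forall>Q. blocking_set (cyc_points v) (cyc_blocks v) Q \<longrightarrow> m_val v \<le> card Q)"
proof
  have v0: "v > 0" using assms by simp
  show "\<exists>Q. blocking_set (cyc_points v) (cyc_blocks v) Q \<and> card Q = m_val v"
  proof -
    obtain Q where Q: "Q \<subseteq> {0..<v}" "good v Q" "card Q = m_val v" using upper[OF assms] by blast
    have "blocking_set (cyc_points v) (cyc_blocks v) Q" using Q(1,2) bs_iff[of v Q] by simp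
    then show ?thesis using Q(3) by blast
  qed
  show "\<forall>Q. blocking_set (cyc_points v) (cyc_blocks v) Q \<longrightarrow> m_val v \<le> card Q"
  proof (intro allI impI)
    fix Q assume "blocking_set (cyc_points v) (cyc_blocks v) Q"
    then have Q: "Q \<subseteq> {0..<v}" "good v Q" using bs_iff[of v Q] by simp_all
    show "m_val v \<le> card Q"
    proof (rule lower[OF assms Q(1)])
      fix m assume "m < v"
      then show "\<not> ((m \<in> Q \<and> (m+1) mod v \<in> Q \<and> (m+3) mod v \<in> Q) \<or> (m \<notin> Q \<and> (m+1) mod v \<notin> Q \<and> (m+3) mod v \<notin> Q))"
        using Q(2) unfolding good_def by blast
    qed
  qed
qed

end
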